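(* Let $\ell\ge2$, let $\mathcal R$ be an $\ell$-vertex rule with associated graphs $(G(m))_{m\ge0}$ on $[n]$, and fix $0<\alpha\le1$, $D>0$ and an integer $B\ge2$. Let $\mathcal L(\alpha,B,D)$ denote the event that for all integers $0\le m\le n^2$ and \[1\le k\le \min\Bigl\{\frac{\alpha^2e^{-4\ell BD}}{8\ell^2B^2D}\frac{n}{\log n},\ \frac{n}{2B}\Bigr\}\] the following holds: if $M_k^B(m)\ge\alpha n$, then $M_k^B(m+\Delta)>\frac{\alpha}{2B}e^{-2\ell BD}n$ for every integer $0\le\Delta\le D\frac nk$. Then $\Pr(\mathcal L(\alpha,B,D))\ge1-n^{-1}$.
   Context: $\ell$-vertex rule: fix an integer $\ell\ge2$. For each $n$, let $(\underline v_1,\underline v_2,\dots)$ be an i.i.d. sequence, where each $\underline v_m=(v_{m,1},\dots,v_{m,\ell})$ consists of $\ell$ vertices of $[n]$ chosen independently and uniformly at random. There is a filtration $\mathcal F_0\subseteq\mathcal F_1\subseteq\cdots$ such that $\underline v_m$ is $\mathcal F_m$-measurable and independent of $\mathcal F_{m-1}$. An $\ell$-vertex rule is a random sequence of graphs $(G(m))_{m\ge0}$ on $[n]$ such that: (i) $G(0)$ is empty; (ii) for $m\ge1$, $G(m)=G(m-1)\cup E_m$ where $E_m$ is a (possibly empty) $\mathcal F_m$-measurable set of edges each joining two vertices of $\underline v_m$; (iii) if the $\ell$ vertices of $\underline v_m$ lie in $\ell$ distinct components of $G(m-1)$, then $E_m\ne\varnothing$. Notation: $N_{\ge k}(m)$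 is the number of vertices of $G(m)$ in components with at least $k$ vertices, and $M_k^B(m)=N_{\ge k}(m)-N_{\ge Bk}(m)$ is the number of vertices in components with between $k$ and $Bk-1$ vertices; $\log$ is the natural logarithm. *)

theory Defs
  imports "HOL-Probability.Probability"
begin

definition vertex_tuples :: "nat \<Rightarrow> nat \<Rightarrow> nat list set" where
  "vertex_tuples n l = {xs. length xs = l \<and> set xs \<subseteq> {1..n}}"

text \<open>A graph is given by its edge set: a set of 2-element vertex sets.\<close>
definition edge_rel :: "nat set set \<Rightarrow> (nat \<times> nat) set" where
  "edge_rel G = {(a, b). {a, b} \<in> G}"

definition comp :: "nat \<Rightarrow> nat set set \<Rightarrow> nat \<Rightarrow> nat set" where
  "comp n G v = {u \<in> {1..n}. (v, u) \<in> (edge_rel G)\<^sup>*}"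

definition graph_at :: "(nat \<Rightarrow> 'a \<Rightarrow> nat set set) \<Rightarrow> nat \<Rightarrow> 'a \<Rightarrow> nat set set" where
  "graph_at E m \<omega> = (\<Union>i\<in>{1..m}. E i \<omega>)"

definition N_ge :: "nat \<Rightarrow> nat set set \<Rightarrow> nat \<Rightarrow> nat" where
  "N_ge n G k = card {u \<in> {1..n}. k \<le> card (comp n G u)}"

definition M_kB :: "nat \<Rightarrow> nat set set \<Rightarrow> nat \<Rightarrow> nat \<Rightarrow> int" where
  "M_kB n G k B = int (N_ge n G k) - int (N_ge n G (B * k))"

text \<open>l-vertex rule on [n]: probability space M, filtration F, the random tuples v m
  (m >= 1) and the added edge sets E m (m >= 1).  v m is F m-measurable, uniform on
  [n]^l and independent of F (m-1) (stated explicitly for this discrete variable).\<close>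
definition ell_vertex_rule ::
  "'a measure \<Rightarrow> (nat \<Rightarrow> 'a measure) \<Rightarrow> nat \<Rightarrow> nat \<Rightarrow> (nat \<Rightarrow> 'a \<Rightarrow> nat list)
     \<Rightarrow> (nat \<Rightarrow> 'a \<Rightarrow> nat set set) \<Rightarrow> bool" where
  "ell_vertex_rule M F n l v E \<longleftrightarrow>
     prob_space M \<and>
     (\<forall>m. sets (F m) \<subseteq> sets M \<and> space (F m) = space M) \<and>
     (\<forall>i j. i \<le> j \<longrightarrow> sets (F i) \<subseteq> sets (F j)) \<and>
     (\<forall>m\<ge>1. v m \<in> measurable (F m) (count_space UNIV) \<and>
        (\<forall>\<omega>\<in>space M. v m \<omega> \<in> vertex_tuples n l) \<and>
        (\<forall>A\<in>sets (F (m - 1)). \<forall>xs\<in>vertex_tuples n l.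
            measure M (A \<inter> {\<omega> \<in> space M. v m \<omega> = xs}) = measure M A / real n ^ l)) \<and>
     (\<forall>m\<ge>1. E m \<in> measurable (F m) (count_space UNIV) \<and>
        (\<forall>\<omega>\<in>space M. E m \<omega> \<subseteq> {{a, b} | a b. a \<in> set (v m \<omega>) \<and> b \<in> set (v m \<omega>) \<and> a \<noteq> b}) \<and>
        (\<forall>\<omega>\<in>space M.
           (\<forall>i<l. \<forall>j<l. i \<noteq> j \<longrightarrow>
              comp n (graph_at E (m - 1) \<omega>) (v m \<omega> ! i) \<noteq> comp n (graph_at E (m - 1) \<omega>) (v m \<omega> ! j))
           \<longrightarrow> E m \<omega> \<noteq> {}))"

end

theory Submission
  imports Defs "HOL-Probability.Probability"
begin


lemma hoeff_discrete:
  fixes X :: "'b set" and g :: "'b \<Rightarrow> real"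
  assumes fin: "finite X" and ne: "X \<noteq> {}" and bnd: "\<And>x. x \<in> X \<Longrightarrow> a \<le> g x \<and> g x \<le> b" and l: "l > 0"
  shows "(\<Sum>x\<in>X. exp (l * (g x - (\<Sum>y\<in>X. g y) / card X))) \<le> card X * exp (l\<^sup>2 * (b - a)\<^sup>2 / 8)"
proof -
  interpret interval_bounded_random_variable "measure_pmf (pmf_of_set X)" g a b
    by unfold_locales (use fin ne bnd in \<open>auto simp: AE_measure_pmf_iff\<close>)
  have "nn_integral (measure_pmf (pmf_of_set X)) (\<lambda>x. exp (l * (g x - (\<integral>y. g y \<partial>measure_pmf (pmf_of_set X))))) \<le> ennreal (exp (l\<^sup>2 * (b - a)\<^sup>2 / 8))"
    by (rule Hoeffdings_lemma_nn_integral) (rule l)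
  also have "(\<integral>y. g y \<partial>measure_pmf (pmf_of_set X)) = (\<Sum>y\<in>X. g y) / card X"
    using fin ne by (simp add: integral_pmf_of_set)
  finally have F: "(\<Sum>x\<in>X. ennreal (exp (l * (g x - (\<Sum>y\<in>X. g y) / card X)))) / card X \<le> ennreal (exp (l\<^sup>2 * (b - a)\<^sup>2 / 8))"
    using fin ne by (simp add: nn_integral_pmf_of_set)
  have "ennreal (\<Sum>x\<in>X. exp (l * (g x - (\<Sum>y\<in>X. g y) / card X))) / ennreal (card X) \<le> ennreal (exp (l\<^sup>2 * (b - a)\<^sup>2 / 8))"
  proof -
    have "(\<Sum>x\<in>X. ennreal (exp (l * (g x - (\<Sum>y\<in>X. g y) / card X)))) = ennreal (\<Sum>x\<in>X. exp (l * (g x - (\<Sum>y\<in>X. g y) / card X)))"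
      by (rule sum_ennreal) auto
    moreover have "(of_nat (card X) :: ennreal) = ennreal (real (card X))" by (simp add: ennreal_of_nat_eq_real_of_nat)
    ultimately show ?thesis using F by (simp only:)
  qed
  hence "ennreal ((\<Sum>x\<in>X. exp (l * (g x - (\<Sum>y\<in>X. g y) / card X))) / card X) \<le> ennreal (exp (l\<^sup>2 * (b - a)\<^sup>2 / 8))"
    using fin ne by (subst divide_ennreal[symmetric]) (auto simp: card_gt_0_iff intro: sum_nonneg)
  hence "(\<Sum>x\<in>X. exp (l * (g x - (\<Sum>y\<in>X. g y) / card X))) / card X \<le> exp (l\<^sup>2 * (b - a)\<^sup>2 / 8)"
    by (subst (asm) ennreal_le_iff) auto
  thus ?thesis using fin ne by (simp add: field_simps card_gt_0_iff)
qed



definition LS :: "'b set \<Rightarrow> nat \<Rightarrow> 'b list set" where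
  "LS X N = {xs. set xs \<subseteq> X \<and> length xs = N}"

lemma finite_LS: "finite X \<Longrightarrow> finite (LS X N)"
  unfolding LS_def by (rule finite_lists_length_eq)

lemma card_LS: "finite X \<Longrightarrow> card (LS X N) = card X ^ N"
  unfolding LS_def by (rule card_lists_length_eq)

lemma LS_0: "LS X 0 = {[]}" unfolding LS_def by auto

lemma sum_LS_Suc:
  fixes \<phi> :: "'b list \<Rightarrow> real"
  assumes "finite X"
  shows "(\<Sum>ys\<in>LS X (Suc N). \<phi> ys) = (\<Sum>x\<in>X. \<Sum>xs\<in>LS X N. \<phi> (x # xs))"
proof -
  have "LS X (Suc N) = (\<lambda>(xs, x). x # xs) ` (LS X N \<times> X)"
    unfolding LS_def by (rule lists_length_Suc_eq)
  moreover have "inj_on (\<lambda>(xs, x). x # xs) (LS X N \<times> X)"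
    by (auto simp: inj_on_def)
  ultimately have "(\<Sum>ys\<in>LS X (Suc N). \<phi> ys) = (\<Sum>p\<in>LS X N \<times> X. \<phi> ((\<lambda>(xs, x). x # xs) p))"
    by (simp add: sum.reindex del: split_paired_all)
  also have "\<dots> = (\<Sum>p\<in>LS X N \<times> X. \<phi> (snd p # fst p))"
    by (simp add: case_prod_beta)
  also have "\<dots> = (\<Sum>xs\<in>LS X N. \<Sum>x\<in>X. \<phi> (x # xs))"
    by (simp add: sum.cartesian_product case_prod_beta)
  also have "\<dots> = (\<Sum>x\<in>X. \<Sum>xs\<in>LS X N. \<phi> (x # xs))"
    by (rule sum.swap)
  finally show ?thesis .
qed

lemma mcdiarmid_mgf:
  fixes X :: "'b set" and f :: "'b list \<Rightarrow> real"
  assumes fin: "finite X" and ne: "X \<noteq> {}" and c: "c \<ge> 0" and l: "l > 0"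
    and bd: "\<And>as bs x y. x \<in> X \<Longrightarrow> y \<in> X \<Longrightarrow> \<bar>f (as @ x # bs) - f (as @ y # bs)\<bar> \<le> c"
  shows "(\<Sum>ys\<in>LS X N. exp (l * ((\<Sum>zs\<in>LS X N. f zs) / card X ^ N - f ys)))
           \<le> card X ^ N * exp (l\<^sup>2 * N * c\<^sup>2 / 8)"
  using bd
proof (induction N arbitrary: f)
  case 0
  then show ?case by (simp add: LS_0)
next
  case (Suc N)
  define K where "K = real (card X ^ N)"
  have K: "K > 0" using fin ne by (simp add: K_def card_gt_0_iff)
  define h where "h x = (\<Sum>xs\<in>LS X N. f (x # xs)) / K" for x
  have avg: "(\<Sum>zs\<in>LS X (Suc N). f zs) / card X ^ Suc N = (\<Sum>x\<in>X. h x) / card X"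
    using fin ne K by (simp add: sum_LS_Suc h_def K_def sum_divide_distrib[symmetric] field_simps)
  define avg where "avg = (\<Sum>x\<in>X. h x) / card X"
  have IH: "(\<Sum>xs\<in>LS X N. exp (l * (h x - f (x # xs)))) \<le> K * exp (l\<^sup>2 * N * c\<^sup>2 / 8)" for x
  proof -
    have "\<bar>f (x # as @ y # bs) - f (x # as @ z # bs)\<bar> \<le> c" if "y \<in> X" "z \<in> X" for as bs y z
      using Suc.prems[of y z "x # as" bs] that by simp
    from Suc.IH[of "\<lambda>xs. f (x # xs)", OF this]
    show ?thesis by (simp add: h_def K_def)
  qed
  have hdiff: "h x - h y \<le> c" if "x \<in> X" "y \<in> X" for x y
  proof -
    have "h x - h y = (\<Sum>xs\<in>LS X N. f (x # xs) - f (y # xs)) / K"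
      by (simp add: h_def sum_subtractf diff_divide_distrib)
    also have "\<dots> \<le> (\<Sum>xs\<in>LS X N. c) / K"
    proof (intro divide_right_mono sum_mono)
      fix xs show "f (x # xs) - f (y # xs) \<le> c"
        using Suc.prems[of x y "[]" xs] that by simp
    qed (use K in auto)
    also have "\<dots> = c" using K fin ne by (simp add: card_LS K_def)
    finally show ?thesis .
  qed
  define g where "g x = - h x" for x
  define a where "a = Min (g ` X)"
  define b where "b = Max (g ` X)"
  have gab: "a \<le> g x \<and> g x \<le> b" if "x \<in> X" for x
    using that fin unfolding a_def b_def by auto
  obtain x0 where x0: "x0 \<in> X" "a = g x0" using fin ne unfolding a_def
    by (metis (no_types, lifting) Min_in finite_imageI image_iff image_is_empty)
  obtain x1 where x1: "x1 \<in> X" "b = g x1" using fin ne unfolding b_def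
    by (metis (no_types, lifting) Max_in finite_imageI image_iff image_is_empty)
  have ba: "b - a \<le> c" "0 \<le> b - a"
    using hdiff[OF x0(1) x1(1)] x0 x1 gab[OF x0(1)] by (auto simp: g_def)
  have "(\<Sum>x\<in>X. exp (l * (g x - (\<Sum>y\<in>X. g y) / card X))) \<le> card X * exp (l\<^sup>2 * (b - a)\<^sup>2 / 8)"
    by (rule hoeff_discrete[OF fin ne gab l])
  also have "\<dots> \<le> card X * exp (l\<^sup>2 * c\<^sup>2 / 8)"
    using ba by (intro mult_left_mono) (auto intro!: mult_left_mono power_mono)
  finally have H: "(\<Sum>x\<in>X. exp (l * (avg - h x))) \<le> card X * exp (l\<^sup>2 * c\<^sup>2 / 8)"
    by (simp add: g_def avg_def sum_negf algebra_simps)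
  have "(\<Sum>ys\<in>LS X (Suc N). exp (l * ((\<Sum>zs\<in>LS X (Suc N). f zs) / card X ^ Suc N - f ys)))
      = (\<Sum>x\<in>X. \<Sum>xs\<in>LS X N. exp (l * (avg - h x)) * exp (l * (h x - f (x # xs))))"
    unfolding avg avg_def[symmetric] using fin
    by (simp add: sum_LS_Suc exp_add[symmetric] algebra_simps)
  also have "\<dots> = (\<Sum>x\<in>X. exp (l * (avg - h x)) * (\<Sum>xs\<in>LS X N. exp (l * (h x - f (x # xs)))))"
    by (simp add: sum_distrib_left)
  also have "\<dots> \<le> (\<Sum>x\<in>X. exp (l * (avg - h x)) * (K * exp (l\<^sup>2 * N * c\<^sup>2 / 8)))"
    by (intro sum_mono mult_left_mono IH) auto
  also have "\<dots> = (\<Sum>x\<in>X. exp (l * (avg - h x))) * (K * exp (l\<^sup>2 * N * c\<^sup>2 / 8))"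
    by (simp add: sum_distrib_right)
  also have "\<dots> \<le> (card X * exp (l\<^sup>2 * c\<^sup>2 / 8)) * (K * exp (l\<^sup>2 * N * c\<^sup>2 / 8))"
    using K by (intro mult_right_mono H) auto
  also have "\<dots> = card X ^ Suc N * exp (l\<^sup>2 * Suc N * c\<^sup>2 / 8)"
    by (simp add: K_def exp_add[symmetric] algebra_simps add_divide_distrib)
  finally show ?case .
qed

lemma mcdiarmid_tail:
  fixes X :: "'b set" and f :: "'b list \<Rightarrow> real"
  assumes fin: "finite X" and ne: "X \<noteq> {}" and c: "c > 0" and N: "N > 0" and t: "t > 0"
    and bd: "\<And>as bs x y. x \<in> X \<Longrightarrow> y \<in> X \<Longrightarrow> \<bar>f (as @ x # bs) - f (as @ y # bs)\<bar> \<le> c"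
  shows "real (card {ys\<in>LS X N. f ys \<le> (\<Sum>zs\<in>LS X N. f zs) / card X ^ N - t})
           \<le> card X ^ N * exp (- 2 * t\<^sup>2 / (N * c\<^sup>2))"
proof -
  define avg where "avg = (\<Sum>zs\<in>LS X N. f zs) / card X ^ N"
  define l where "l = 4 * t / (N * c\<^sup>2)"
  have l: "l > 0" using c N t by (simp add: l_def)
  define S where "S = {ys\<in>LS X N. f ys \<le> avg - t}"
  have "real (card S) * exp (l * t) = (\<Sum>ys\<in>S. exp (l * t))" by simp
  also have "\<dots> \<le> (\<Sum>ys\<in>S. exp (l * (avg - f ys)))"
    by (intro sum_mono) (use l in \<open>auto simp: S_def intro!: mult_left_mono\<close>)
  also have "\<dots> \<le> (\<Sum>ys\<in>LS X N. exp (l * (avg - f ys)))"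
    by (intro sum_mono2 finite_LS fin) (auto simp: S_def)
  also have "\<dots> \<le> card X ^ N * exp (l\<^sup>2 * N * c\<^sup>2 / 8)"
    unfolding avg_def by (rule mcdiarmid_mgf[OF fin ne _ l]) (use c bd in auto)
  finally have "real (card S) \<le> card X ^ N * exp (l\<^sup>2 * N * c\<^sup>2 / 8) / exp (l * t)"
    by (simp add: field_simps)
  also have "\<dots> = card X ^ N * exp (l\<^sup>2 * N * c\<^sup>2 / 8 - l * t)"
    by (simp add: exp_diff)
  also have "l\<^sup>2 * N * c\<^sup>2 / 8 - l * t = - 2 * t\<^sup>2 / (N * c\<^sup>2)"
    using c N by (simp add: l_def field_simps power2_eq_square)
  finally show ?thesis unfolding S_def avg_def .
qed



lemma edge_rel_sym: "sym (edge_rel G)"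
  unfolding edge_rel_def sym_def by (auto simp: insert_commute)

lemma comp_sub: "comp n G u \<subseteq> {1..n}" unfolding comp_def by auto

lemma finite_comp: "finite (comp n G u)" by (rule finite_subset[OF comp_sub]) auto

lemma comp_self: "u \<in> {1..n} \<Longrightarrow> u \<in> comp n G u" unfolding comp_def by auto

lemma comp_eq: assumes "z \<in> comp n G u" shows "comp n G z = comp n G u"
proof -
  have zu: "(u, z) \<in> (edge_rel G)\<^sup>*" using assms by (auto simp: comp_def)
  have "sym ((edge_rel G)\<^sup>*)" by (rule sym_rtrancl[OF edge_rel_sym])
  hence uz: "(z, u) \<in> (edge_rel G)\<^sup>*" using zu by (auto simp: sym_def)
  show ?thesis unfolding comp_def using zu uz by (auto intro: rtrancl_trans)
qed

definition goodW :: "nat \<Rightarrow> nat set set \<Rightarrow> nat \<Rightarrow> nat \<Rightarrow> nat set" where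
  "goodW n G k B = {u\<in>{1..n}. k \<le> card (comp n G u) \<and> card (comp n G u) < B * k}"

definition Ucnt :: "nat \<Rightarrow> nat set set \<Rightarrow> nat \<Rightarrow> nat \<Rightarrow> nat list list \<Rightarrow> nat" where
  "Ucnt n G k B ys = card {u\<in>goodW n G k B. \<forall>y\<in>set ys. set y \<inter> comp n G u = {}}"

lemma M_kB_goodW: assumes "B \<ge> 1" shows "M_kB n G k B = int (card (goodW n G k B))"
proof -
  have "k \<le> B * k" using assms by simp
  have sub: "{u \<in> {1..n}. B * k \<le> card (comp n G u)} \<subseteq> {u \<in> {1..n}. k \<le> card (comp n G u)}"
    using \<open>k \<le> B * k\<close> by (auto intro: le_trans[OF \<open>k \<le> B * k\<close>])
  have "goodW n G k B = {u \<in> {1..n}. k \<le> card (comp n G u)} - {u \<in> {1..n}. B * k \<le> card (comp n G u)}"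
    unfolding goodW_def by auto
  hence "card (goodW n G k B) = N_ge n G k - N_ge n G (B * k)"
    unfolding N_ge_def using sub by (simp add: card_Diff_subset finite_subset)
  moreover have "N_ge n G (B * k) \<le> N_ge n G k"
    unfolding N_ge_def using sub by (intro card_mono) auto
  ultimately show ?thesis unfolding M_kB_def by simp
qed

lemma vertex_tuples_LS: "vertex_tuples n l = LS {1..n} l"
  unfolding vertex_tuples_def LS_def by auto

lemma card_hit_le:
  assumes "B \<ge> 1"
  shows "card {u\<in>goodW n G k B. z \<in> comp n G u} \<le> B * k"
proof (cases "\<exists>u0\<in>goodW n G k B. z \<in> comp n G u0")
  case True
  then obtain u0 where u0: "u0 \<in> goodW n G k B" "z \<in> comp n G u0" by auto
  have "{u\<in>goodW n G k B. z \<in> comp n G u} \<subseteq> comp n G u0"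
  proof
    fix u assume u: "u \<in> {u\<in>goodW n G k B. z \<in> comp n G u}"
    have "comp n G u = comp n G u0" using comp_eq[of z n G u] comp_eq[OF u0(2)] u by auto
    moreover have "u \<in> comp n G u" using u by (intro comp_self) (auto simp: goodW_def)
    ultimately show "u \<in> comp n G u0" by simp
  qed
  hence "card {u\<in>goodW n G k B. z \<in> comp n G u} \<le> card (comp n G u0)"
    by (intro card_mono finite_comp)
  also have "\<dots> \<le> B * k" using u0(1) by (auto simp: goodW_def)
  finally show ?thesis .
next
  case False
  hence "{u\<in>goodW n G k B. z \<in> comp n G u} = {}" by auto
  thus ?thesis by (metis card.empty zero_le)
qed

lemma Ucnt_bd:
  assumes "B \<ge> 1" "x \<in> vertex_tuples n l" "y \<in> vertex_tuples n l"
  shows "\<bar>real (Ucnt n G k B (as @ x # bs)) - real (Ucnt n G k B (as @ y # bs))\<bar> \<le> real (l * B * k)"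
proof -
  have one: "real (Ucnt n G k B (as @ x # bs)) \<le> real (Ucnt n G k B (as @ y # bs)) + real (l * B * k)"
    if xy: "x \<in> vertex_tuples n l" "y \<in> vertex_tuples n l" for x y
  proof -
    define W where "W = goodW n G k B"
    have finW: "finite W" unfolding W_def goodW_def by auto
    define H where "H = (\<Union>z\<in>set y. {u\<in>W. z \<in> comp n G u})"
    have "{u\<in>W. \<forall>y\<in>set (as @ x # bs). set y \<inter> comp n G u = {}}
          \<subseteq> {u\<in>W. \<forall>y\<in>set (as @ y # bs). set y \<inter> comp n G u = {}} \<union> H"
      unfolding H_def by auto
    hence "Ucnt n G k B (as @ x # bs) \<le> card ({u\<in>W. \<forall>y\<in>set (as @ y # bs). set y \<inter> comp n G u = {}} \<union> H)"
      unfolding Ucnt_def W_def[symmetric] using finW H_def by (intro card_mono) auto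
    also have "\<dots> \<le> Ucnt n G k B (as @ y # bs) + card H"
      unfolding Ucnt_def W_def[symmetric] by (rule card_Un_le)
    finally have U1: "Ucnt n G k B (as @ x # bs) \<le> Ucnt n G k B (as @ y # bs) + card H" .
    have "card H \<le> (\<Sum>z\<in>set y. card {u\<in>W. z \<in> comp n G u})"
      unfolding H_def by (rule card_UN_le) auto
    also have "\<dots> \<le> (\<Sum>z\<in>set y. B * k)"
      unfolding W_def by (intro sum_mono card_hit_le assms(1))
    also have "\<dots> = card (set y) * (B * k)" by simp
    also have "\<dots> \<le> l * (B * k)"
      using xy card_length[of y] by (intro mult_right_mono) (auto simp: vertex_tuples_def)
    finally have "Ucnt n G k B (as @ x # bs) \<le> Ucnt n G k B (as @ y # bs) + l * (B * k)" using U1 by linarith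
    hence "real (Ucnt n G k B (as @ x # bs)) \<le> real (Ucnt n G k B (as @ y # bs) + l * (B * k))"
      by (simp only: of_nat_le_iff)
    thus ?thesis by (simp add: mult.assoc)
  qed
  show ?thesis using one[OF assms(2,3)] one[OF assms(3,2)] by linarith
qed




lemma one_minus_ge_exp:
  fixes x :: real assumes "0 \<le> x" "x \<le> 1/2" shows "exp (-2 * x) \<le> 1 - x"
proof -
  have "1 + 2 * x \<le> exp (2 * x)" by (rule exp_ge_add_one_self)
  hence "exp (-2 * x) \<le> 1 / (1 + 2 * x)" using assms
    by (simp add: exp_minus field_simps)
  also have "\<dots> \<le> 1 - x"
  proof -
    have "0 \<le> x * (1 - 2 * x)" using assms by simp
    hence "1 \<le> (1 - x) * (1 + 2 * x)" by (simp add: algebra_simps)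
    thus ?thesis using assms by (simp add: divide_le_eq)
  qed
  finally show ?thesis .
qed

lemma term_lb:
  fixes D :: real
  assumes n: "n > 0" and s: "s \<le> B * k" and Bk: "real (B * k) \<le> real n / 2"
    and T: "real T \<le> D * n / k" and k: "k > 0" and D: "D > 0"
  shows "exp (-2 * l * B * D) \<le> (real (n - s) / n) ^ (l * T)"
proof -
  define x where "x = real s / n"
  have x0: "0 \<le> x" using n by (simp add: x_def)
  have xB: "x \<le> real (B * k) / n" using s n unfolding x_def by (intro divide_right_mono) (simp only: of_nat_le_iff, simp)
  have x12: "x \<le> 1/2"
  proof -
    have "x * n \<le> real (B * k)" using xB n by (simp add: field_simps)
    hence "(x * 2) * real n \<le> 1 * real n" using Bk by simp
    hence "x * 2 \<le> 1" using n by (metis mult_le_cancel_right of_nat_0_less_iff not_less)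
    thus ?thesis by simp
  qed
  have sn: "s \<le> n" using s Bk n by linarith
  have eq: "real (n - s) / n = 1 - x" using sn n by (simp add: x_def of_nat_diff field_simps)
  have "x * T \<le> (real (B * k) / n) * (D * n / k)"
    using xB T x0 by (intro mult_mono) auto
  also have "\<dots> = B * D" using n k by (simp add: field_simps)
  finally have xT: "x * T \<le> B * D" .
  have "exp (-2 * l * B * D) \<le> exp (-2 * x * (l * T))"
  proof -
    have "(x * T) * l \<le> (B * D) * l" using xT by (rule mult_right_mono) simp
    thus ?thesis by (simp add: algebra_simps)
  qed
  also have "\<dots> = exp (-2 * x) ^ (l * T)" by (simp add: exp_of_nat_mult[symmetric] algebra_simps)
  also have "\<dots> \<le> (1 - x) ^ (l * T)" by (intro power_mono one_minus_ge_exp x0 x12) auto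
  finally show ?thesis by (simp add: eq)
qed

lemma sum_Ucnt:
  "(\<Sum>ys\<in>LS (vertex_tuples n l) T. real (Ucnt n G k B ys))
    = (\<Sum>u\<in>goodW n G k B. real (card {ys\<in>LS (vertex_tuples n l) T. \<forall>y\<in>set ys. set y \<inter> comp n G u = {}}))"
proof -
  have finW: "finite (goodW n G k B)" unfolding goodW_def by auto
  have finL: "finite (LS (vertex_tuples n l) T)" by (simp add: vertex_tuples_LS finite_LS)
  have "(\<Sum>ys\<in>LS (vertex_tuples n l) T. real (Ucnt n G k B ys))
     = (\<Sum>ys\<in>LS (vertex_tuples n l) T. \<Sum>u\<in>goodW n G k B. if \<forall>y\<in>set ys. set y \<inter> comp n G u = {} then 1 else 0)"
    unfolding Ucnt_def using finW by (intro sum.cong refl) (simp add: sum.inter_filter[symmetric])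
  also have "\<dots> = (\<Sum>u\<in>goodW n G k B. \<Sum>ys\<in>LS (vertex_tuples n l) T. if \<forall>y\<in>set ys. set y \<inter> comp n G u = {} then 1 else 0)"
    by (rule sum.swap)
  also have "\<dots> = (\<Sum>u\<in>goodW n G k B. real (card {ys\<in>LS (vertex_tuples n l) T. \<forall>y\<in>set ys. set y \<inter> comp n G u = {}}))"
    using finL by (intro sum.cong refl) (simp add: sum.inter_filter[symmetric])
  finally show ?thesis .
qed

lemma card_avoid:
  assumes "C \<subseteq> {1..n}"
  shows "card {ys\<in>LS (vertex_tuples n l) T. \<forall>y\<in>set ys. set y \<inter> C = {}} = ((n - card C) ^ l) ^ T"
proof -
  have "{ys\<in>LS (vertex_tuples n l) T. \<forall>y\<in>set ys. set y \<inter> C = {}} = LS (LS ({1..n} - C) l) T"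
    unfolding vertex_tuples_LS LS_def by auto
  moreover have "card (LS ({1..n} - C) l) = (n - card C) ^ l"
    using assms by (simp add: card_LS card_Diff_subset finite_subset)
  ultimately show ?thesis by (simp add: card_LS finite_LS)
qed



lemma t4: fixes D :: real assumes "real k > 0"
  shows "(D * n / k) * (real (l * B * k))\<^sup>2 = D * n * (real l)\<^sup>2 * (real B)\<^sup>2 * k"
proof -
  have "(real (l * B * k))\<^sup>2 = (real l)\<^sup>2 * (real B)\<^sup>2 * k * k" by (simp add: power2_eq_square)
  thus ?thesis using assms by (simp add: divide_simps)
qed
lemma t1: fixes \<alpha> D a h :: real assumes "k \<le> \<alpha>\<^sup>2 * e / (8 * (real l)\<^sup>2 * (real B)\<^sup>2 * D) * (real n / h)" "h > 0" "e = a\<^sup>2"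
  shows "k * h \<le> \<alpha>\<^sup>2 * a\<^sup>2 / (8 * (real l)\<^sup>2 * (real B)\<^sup>2 * D) * n"
proof -
  have "k * h \<le> \<alpha>\<^sup>2 * e / (8 * (real l)\<^sup>2 * (real B)\<^sup>2 * D) * (real n / h) * h"
    using assms by (intro mult_right_mono) auto
  also have "\<dots> = \<alpha>\<^sup>2 * e / (8 * (real l)\<^sup>2 * (real B)\<^sup>2 * D) * n" using assms(2) by simp
  finally show ?thesis using assms by simp
qed
lemma t2: fixes \<alpha> D a :: real assumes "D > 0" "real l > 0" "real B > 0"
  shows "5 * D * n * (real l)\<^sup>2 * (real B)\<^sup>2 * (\<alpha>\<^sup>2 * a\<^sup>2 / (8 * (real l)\<^sup>2 * (real B)\<^sup>2 * D) * n) = 5/8 * (\<alpha> * n * a)\<^sup>2"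
proof -
  have "8 * (real l)\<^sup>2 * (real B)\<^sup>2 * D > 0" using assms by simp
  hence "D * (real l)\<^sup>2 * (real B)\<^sup>2 * (\<alpha>\<^sup>2 * a\<^sup>2 / (8 * (real l)\<^sup>2 * (real B)\<^sup>2 * D)) = \<alpha>\<^sup>2 * a\<^sup>2 / 8"
    using assms by (simp add: field_simps)
  moreover have "5 * D * n * (real l)\<^sup>2 * (real B)\<^sup>2 * (\<alpha>\<^sup>2 * a\<^sup>2 / (8 * (real l)\<^sup>2 * (real B)\<^sup>2 * D) * n)
     = 5 * n * n * (D * (real l)\<^sup>2 * (real B)\<^sup>2 * (\<alpha>\<^sup>2 * a\<^sup>2 / (8 * (real l)\<^sup>2 * (real B)\<^sup>2 * D)))"
    by (simp only: ac_simps)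
  ultimately show ?thesis by (simp add: power2_eq_square)
qed
lemma t3: fixes x y z :: real assumes "5 * x * y \<le> z" "y > 0"
  shows "5 * x \<le> z / y" using assms by (simp add: pos_le_divide_eq)

lemma key_bound:
  fixes \<alpha> D :: real
  assumes n: "n \<ge> 2" and l: "l \<ge> 1" and B: "B \<ge> 2" and k: "k \<ge> 1" and al: "\<alpha> > 0" and D: "D > 0"
    and hk1: "real k \<le> \<alpha>\<^sup>2 * exp (- 4 * real l * real B * D) / (8 * (real l)\<^sup>2 * (real B)\<^sup>2 * D) * (real n / ln (real n))"
    and hk2: "real k \<le> real n / (2 * real B)"
    and hM: "\<alpha> * n \<le> real (card (goodW n G k B))"
    and T: "real T \<le> D * n / k"
  shows "real (card {ys\<in>LS (vertex_tuples n l) T. real (Ucnt n G k B ys) \<le> \<alpha> / (2 * real B) * exp (- 2 * real l * real B * D) * real n})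
           \<le> real ((n ^ l) ^ T) / real n ^ 5"
proof -
  define X where "X = vertex_tuples n l"
  define W where "W = goodW n G k B"
  define a where "a = exp (- 2 * real l * real B * D)"
  define thr where "thr = \<alpha> / (2 * real B) * a * real n"
  define avg where "avg = (\<Sum>zs\<in>LS X T. real (Ucnt n G k B zs)) / card X ^ T"
  have n0: "n > 0" "real n > 0" using n by auto
  have finX: "finite X" "X \<noteq> {}" "card X = n ^ l"
  proof -
    show "finite X" "card X = n ^ l" unfolding X_def vertex_tuples_LS by (auto simp: finite_LS card_LS)
    thus "X \<noteq> {}" using n0 by auto
  qed
  have finW: "finite W" unfolding W_def goodW_def by auto
  have a0: "a > 0" "a \<le> 1" using l B D by (auto simp: a_def)
  have Bk: "real (B * k) \<le> real n / 2" using hk2 B by (simp add: field_simps)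
  have avg_eq: "avg = (\<Sum>u\<in>W. (real (n - card (comp n G u)) / n) ^ (l * T))"
  proof -
    have "avg = (\<Sum>u\<in>W. real (((n - card (comp n G u)) ^ l) ^ T)) / real ((n ^ l) ^ T)"
      unfolding avg_def X_def W_def sum_Ucnt using comp_sub finX
      by (simp add: card_avoid X_def)
    also have "\<dots> = (\<Sum>u\<in>W. (real (n - card (comp n G u)) / n) ^ (l * T))"
      by (simp add: sum_divide_distrib power_divide power_mult)
    finally show ?thesis .
  qed
  have avg_ge: "avg \<ge> real (card W) * a"
  proof -
    have "real (card W) * a = (\<Sum>u\<in>W. a)" by simp
    also have "\<dots> \<le> avg" unfolding avg_eq
    proof (rule sum_mono)
      fix u assume "u \<in> W"
      hence "card (comp n G u) \<le> B * k" by (auto simp: W_def goodW_def)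
      thus "a \<le> (real (n - card (comp n G u)) / real n) ^ (l * T)"
        unfolding a_def using term_lb[OF n0(1) _ Bk T _ D] k by auto
    qed
    finally show ?thesis .
  qed
  have thr_le: "thr \<le> \<alpha> * n * a / 4"
  proof -
    have "\<alpha> * a * n / (2 * B) \<le> \<alpha> * a * n / 4"
      using al a0 n0 B by (intro divide_left_mono) auto
    thus ?thesis by (simp add: thr_def algebra_simps)
  qed
  have an: "\<alpha> * n * a \<le> avg" using avg_ge hM a0 unfolding W_def
    by (metis mult_right_mono less_imp_le order_trans)
  define t where "t = avg - thr"
  have t: "t \<ge> 3/4 * (\<alpha> * n * a)" using an thr_le by (simp add: t_def)
  have pos: "\<alpha> * n * a > 0" using al n0 a0 by simp
  show ?thesis
  proof (cases "T = 0")
    case True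
    have E: "{ys\<in>LS X T. real (Ucnt n G k B ys) \<le> thr} = {}"
    proof -
      have "real (Ucnt n G k B []) = real (card W)" by (simp add: Ucnt_def W_def)
      moreover have "\<alpha> * n * a \<le> \<alpha> * n" using a0 al n0 by (simp add: mult_left_le)
      ultimately have "real (Ucnt n G k B []) > thr" using hM thr_le pos unfolding W_def
        by linarith
      thus ?thesis using True by (auto simp: LS_0)
    qed
    have "real (card {ys\<in>LS X T. real (Ucnt n G k B ys) \<le> thr}) \<le> real ((n ^ l) ^ T) / real n ^ 5"
      unfolding E by simp
    thus ?thesis unfolding X_def thr_def a_def .
  next
    case False
    define c where "c = real (l * B * k)"
    have c: "c > 0" using l B k by (simp add: c_def)
    have tail: "real (card {ys\<in>LS X T. real (Ucnt n G k B ys) \<le> avg - t}) \<le> card X ^ T * exp (- 2 * t\<^sup>2 / (T * c\<^sup>2))"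
      unfolding avg_def
    proof (rule mcdiarmid_tail[OF finX(1,2) c _ _ ])
      show "\<bar>real (Ucnt n G k B (as @ x # bs)) - real (Ucnt n G k B (as @ y # bs))\<bar> \<le> c"
        if "x \<in> X" "y \<in> X" for as bs x y
        unfolding c_def using Ucnt_bd[of B x n l y G k as bs] that B by (simp add: X_def)
    qed (use False t pos in auto)
    have "5 * ln n * (T * c\<^sup>2) \<le> 2 * t\<^sup>2"
    proof -
      have lnpos: "ln (real n) > 0" using n by simp
      have e4: "exp (- 4 * real l * real B * D) = a\<^sup>2" unfolding a_def
        by (simp add: power2_eq_square exp_add[symmetric])
      have Tc: "T * c\<^sup>2 \<le> (D * n / k) * c\<^sup>2" using T by (intro mult_right_mono) auto
      also have "\<dots> = D * n * (real l)\<^sup>2 * (real B)\<^sup>2 * k" unfolding c_def by (rule t4) (use k in simp)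
      finally have Tc: "T * c\<^sup>2 \<le> D * n * (real l)\<^sup>2 * (real B)\<^sup>2 * k" .
      have kln: "k * ln n \<le> \<alpha>\<^sup>2 * a\<^sup>2 / (8 * (real l)\<^sup>2 * (real B)\<^sup>2 * D) * n"
        by (rule t1[OF hk1 lnpos e4])
      have "5 * ln n * (T * c\<^sup>2) \<le> 5 * ln n * (D * n * (real l)\<^sup>2 * (real B)\<^sup>2 * k)"
        using Tc lnpos by (intro mult_left_mono) auto
      also have "\<dots> = 5 * D * n * (real l)\<^sup>2 * (real B)\<^sup>2 * (k * ln n)" by (simp add: algebra_simps)
      also have "\<dots> \<le> 5 * D * n * (real l)\<^sup>2 * (real B)\<^sup>2 * (\<alpha>\<^sup>2 * a\<^sup>2 / (8 * (real l)\<^sup>2 * (real B)\<^sup>2 * D) * n)"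
        using kln D n0 by (intro mult_left_mono) auto
      also have "\<dots> = 5/8 * (\<alpha> * n * a)\<^sup>2"
        by (rule t2) (use D l B in auto)
      also have "\<dots> \<le> 2 * (3/4 * (\<alpha> * n * a))\<^sup>2"
      proof -
        have "(3/4 * (\<alpha> * n * a))\<^sup>2 = 9/16 * (\<alpha> * n * a)\<^sup>2" by (simp add: power2_eq_square)
        moreover have "0 \<le> (\<alpha> * n * a)\<^sup>2" by simp
        ultimately show ?thesis by linarith
      qed
      also have "\<dots> \<le> 2 * t\<^sup>2" using t pos by (intro mult_left_mono power_mono) auto
      finally show ?thesis .
    qed
    hence "5 * ln n \<le> 2 * t\<^sup>2 / (T * c\<^sup>2)" using False c by (intro t3) auto
    hence "exp (- 2 * t\<^sup>2 / (T * c\<^sup>2)) \<le> exp (- (5 * ln n))" by simp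
    also have "exp (- (5 * ln n)) = 1 / real n ^ 5"
    proof -
      have "5 * ln (real n) = ln (real n ^ 5)" using n0 by (simp add: ln_realpow)
      hence "exp (5 * ln (real n)) = real n ^ 5" using n0 by simp
      thus ?thesis by (simp add: exp_minus divide_inverse)
    qed
    finally have E: "exp (- 2 * t\<^sup>2 / (T * c\<^sup>2)) \<le> 1 / real n ^ 5" .
    have "real (card {ys\<in>LS X T. real (Ucnt n G k B ys) \<le> thr}) \<le> card X ^ T * exp (- 2 * t\<^sup>2 / (T * c\<^sup>2))"
      using tail by (simp add: t_def)
    also have "\<dots> \<le> card X ^ T * (1 / real n ^ 5)" using E by (intro mult_left_mono) auto
    finally show ?thesis unfolding X_def thr_def a_def using finX(3) by (simp add: X_def)
  qed
qed




fun Vs :: "(nat \<Rightarrow> 'a \<Rightarrow> nat list) \<Rightarrow> nat \<Rightarrow> nat \<Rightarrow> 'a \<Rightarrow> nat list list" where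
  "Vs v m 0 \<omega> = []"
| "Vs v m (Suc T) \<omega> = v (Suc m) \<omega> # Vs v (Suc m) T \<omega>"

lemma set_Vs: "y \<in> set (Vs v m T \<omega>) \<longleftrightarrow> (\<exists>i. m < i \<and> i \<le> m + T \<and> y = v i \<omega>)"
proof (induction T arbitrary: m)
  case 0 then show ?case by auto
next
  case (Suc T)
  show ?case
  proof
    assume "y \<in> set (Vs v m (Suc T) \<omega>)"
    hence "y = v (Suc m) \<omega> \<or> y \<in> set (Vs v (Suc m) T \<omega>)" by simp
    thus "\<exists>i. m < i \<and> i \<le> m + Suc T \<and> y = v i \<omega>"
    proof
      assume "y = v (Suc m) \<omega>" thus ?thesis by (intro exI[of _ "Suc m"]) auto
    next
      assume "y \<in> set (Vs v (Suc m) T \<omega>)"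
      then obtain i where "Suc m < i" "i \<le> Suc m + T" "y = v i \<omega>" using Suc[of "Suc m"] by auto
      thus ?thesis by (intro exI[of _ i]) auto
    qed
  next
    assume "\<exists>i. m < i \<and> i \<le> m + Suc T \<and> y = v i \<omega>"
    then obtain i where i: "m < i" "i \<le> m + Suc T" "y = v i \<omega>" by auto
    show "y \<in> set (Vs v m (Suc T) \<omega>)"
    proof (cases "i = Suc m")
      case True thus ?thesis using i by simp
    next
      case False
      have "\<exists>j. Suc m < j \<and> j \<le> Suc m + T \<and> y = v j \<omega>" using i False by (intro exI[of _ i]) auto
      hence "y \<in> set (Vs v (Suc m) T \<omega>)" using Suc[of "Suc m"] by blast
      thus ?thesis by simp
    qed
  qed
qed

lemma length_Vs: "length (Vs v m T \<omega>) = T"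
  by (induction T arbitrary: m) auto

context
  fixes M :: "'a measure" and F :: "nat \<Rightarrow> 'a measure" and n l :: nat
    and v :: "nat \<Rightarrow> 'a \<Rightarrow> nat list" and E :: "nat \<Rightarrow> 'a \<Rightarrow> nat set set"
  assumes R: "ell_vertex_rule M F n l v E"
begin

lemma R_prob: "prob_space M" using R unfolding ell_vertex_rule_def by auto
lemma R_sets: "sets (F m) \<subseteq> sets M" using R unfolding ell_vertex_rule_def by auto
lemma R_space: "space (F m) = space M" using R unfolding ell_vertex_rule_def by auto
lemma R_mono: "i \<le> j \<Longrightarrow> sets (F i) \<subseteq> sets (F j)" using R unfolding ell_vertex_rule_def by auto
lemma R_vmeas: "m \<ge> 1 \<Longrightarrow> v m \<in> measurable (F m) (count_space UNIV)"
  using R unfolding ell_vertex_rule_def by auto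
lemma R_vrange: "m \<ge> 1 \<Longrightarrow> \<omega> \<in> space M \<Longrightarrow> v m \<omega> \<in> vertex_tuples n l"
  using R unfolding ell_vertex_rule_def by auto
lemma R_unif: "m \<ge> 1 \<Longrightarrow> A \<in> sets (F (m - 1)) \<Longrightarrow> xs \<in> vertex_tuples n l \<Longrightarrow>
    measure M (A \<inter> {\<omega> \<in> space M. v m \<omega> = xs}) = measure M A / real n ^ l"
  using R unfolding ell_vertex_rule_def by auto
lemma R_Emeas: "m \<ge> 1 \<Longrightarrow> E m \<in> measurable (F m) (count_space UNIV)"
  using R unfolding ell_vertex_rule_def by auto
lemma R_Erange: "m \<ge> 1 \<Longrightarrow> \<omega> \<in> space M \<Longrightarrow>
    E m \<omega> \<subseteq> {{a, b} | a b. a \<in> set (v m \<omega>) \<and> b \<in> set (v m \<omega>) \<and> a \<noteq> b}"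
  using R unfolding ell_vertex_rule_def by auto

lemma sets_F_sub: "A \<in> sets (F m) \<Longrightarrow> A \<subseteq> space M"
  using sets.sets_into_space[of A "F m"] R_space by auto

lemma v_pre: "m \<ge> 1 \<Longrightarrow> {\<omega> \<in> space M. v m \<omega> = y} \<in> sets (F m)"
proof -
  assume m: "m \<ge> 1"
  have "v m -` {y} \<inter> space (F m) \<in> sets (F m)"
    by (rule measurable_sets[OF R_vmeas[OF m]]) auto
  moreover have "v m -` {y} \<inter> space (F m) = {\<omega> \<in> space M. v m \<omega> = y}" using R_space by auto
  ultimately show ?thesis by simp
qed

lemma E_pre: "m \<ge> 1 \<Longrightarrow> {\<omega> \<in> space M. E m \<omega> = y} \<in> sets (F m)"
proof -
  assume m: "m \<ge> 1"
  have "E m -` {y} \<inter> space (F m) \<in> sets (F m)"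
    by (rule measurable_sets[OF R_Emeas[OF m]]) auto
  moreover have "E m -` {y} \<inter> space (F m) = {\<omega> \<in> space M. E m \<omega> = y}" using R_space by auto
  ultimately show ?thesis by simp
qed

lemma Vs_LS: "\<omega> \<in> space M \<Longrightarrow> Vs v m T \<omega> \<in> LS (vertex_tuples n l) T"
  unfolding LS_def using set_Vs[of _ v m T \<omega>] R_vrange length_Vs by fastforce

lemma Vs_joint:
  assumes "A \<in> sets (F m)" "ys \<in> LS (vertex_tuples n l) T"
  shows "A \<inter> {\<omega> \<in> space M. Vs v m T \<omega> = ys} \<in> sets (F (m + T)) \<and>
         measure M (A \<inter> {\<omega> \<in> space M. Vs v m T \<omega> = ys}) = measure M A / (real n ^ l) ^ T"
  using assms
proof (induction T arbitrary: m A ys)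
  case 0
  hence "ys = []" by (simp add: LS_def)
  hence "A \<inter> {\<omega> \<in> space M. Vs v m 0 \<omega> = ys} = A" using sets_F_sub[OF 0(1)] by auto
  thus ?case using 0 by simp
next
  case (Suc T)
  obtain y ys' where ys: "ys = y # ys'" "y \<in> vertex_tuples n l" "ys' \<in> LS (vertex_tuples n l) T"
    using Suc.prems(2) unfolding LS_def by (cases ys) auto
  define A' where "A' = A \<inter> {\<omega> \<in> space M. v (Suc m) \<omega> = y}"
  have A': "A' \<in> sets (F (Suc m))"
    unfolding A'_def using R_mono[of m "Suc m"] Suc.prems(1) v_pre[of "Suc m" y] by auto
  have eq: "A \<inter> {\<omega> \<in> space M. Vs v m (Suc T) \<omega> = ys} = A' \<inter> {\<omega> \<in> space M. Vs v (Suc m) T \<omega> = ys'}"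
    unfolding A'_def ys by auto
  have mA': "measure M A' = measure M A / real n ^ l"
    unfolding A'_def using R_unif[of "Suc m" A y] Suc.prems(1) ys(2) by simp
  from Suc.IH[OF A' ys(3)] show ?case unfolding eq mA' by simp
qed

lemma Vs_bad:
  assumes "A \<in> sets (F m)"
  shows "measure M (A \<inter> {\<omega> \<in> space M. Vs v m T \<omega> \<in> Bad})
          \<le> real (card (Bad \<inter> LS (vertex_tuples n l) T)) * measure M A / (real n ^ l) ^ T"
proof -
  interpret prob_space M by (rule R_prob)
  define S where "S = Bad \<inter> LS (vertex_tuples n l) T"
  have finS: "finite S" unfolding S_def vertex_tuples_LS by (auto intro: finite_LS)
  have "A \<inter> {\<omega> \<in> space M. Vs v m T \<omega> \<in> Bad} = (\<Union>ys\<in>S. A \<inter> {\<omega> \<in> space M. Vs v m T \<omega> = ys})"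
    unfolding S_def using Vs_LS by auto
  moreover have "measure M (\<Union>ys\<in>S. A \<inter> {\<omega> \<in> space M. Vs v m T \<omega> = ys})
       \<le> (\<Sum>ys\<in>S. measure M (A \<inter> {\<omega> \<in> space M. Vs v m T \<omega> = ys}))"
  proof (rule finite_measure_subadditive_finite[OF finS])
    show "(\<lambda>ys. A \<inter> {\<omega> \<in> space M. Vs v m T \<omega> = ys}) ` S \<subseteq> events"
      using Vs_joint[OF assms] R_sets unfolding S_def by blast
  qed
  ultimately have "measure M (A \<inter> {\<omega> \<in> space M. Vs v m T \<omega> \<in> Bad})
       \<le> (\<Sum>ys\<in>S. measure M (A \<inter> {\<omega> \<in> space M. Vs v m T \<omega> = ys}))" by simp
  also have "\<dots> = (\<Sum>ys\<in>S. measure M A / (real n ^ l) ^ T)"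
    using Vs_joint[OF assms] unfolding S_def by (intro sum.cong) auto
  finally show ?thesis by (simp add: S_def)
qed

lemma Vs_bad_meas:
  assumes "A \<in> sets (F m)"
  shows "A \<inter> {\<omega> \<in> space M. Vs v m T \<omega> \<in> Bad} \<in> sets M"
proof -
  define S where "S = Bad \<inter> LS (vertex_tuples n l) T"
  have finS: "finite S" unfolding S_def vertex_tuples_LS by (auto intro: finite_LS)
  have "A \<inter> {\<omega> \<in> space M. Vs v m T \<omega> \<in> Bad} = (\<Union>ys\<in>S. A \<inter> {\<omega> \<in> space M. Vs v m T \<omega> = ys})"
    unfolding S_def using Vs_LS by auto
  also have "\<dots> \<in> sets M"
    using Vs_joint[OF assms] R_sets finS unfolding S_def by (intro sets.finite_UN) blast+
  finally show ?thesis .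
qed

end



definition PS :: "nat \<Rightarrow> nat set set" where
  "PS n = {{a, b} | a b. a \<in> {1..n} \<and> b \<in> {1..n}}"

lemma finite_PS: "finite (PS n)"
proof -
  have "PS n \<subseteq> (\<lambda>(a, b). {a, b}) ` ({1..n} \<times> {1..n})" unfolding PS_def by force
  thus ?thesis by (rule finite_subset) simp
qed

lemma PS_I: "a \<in> {1..n} \<Longrightarrow> b \<in> {1..n} \<Longrightarrow> {a, b} \<in> PS n"
  unfolding PS_def by blast

lemma rtrancl_in_V:
  assumes "G \<subseteq> PS n" "(u, w) \<in> (edge_rel G)\<^sup>*" "u \<in> {1..n}"
  shows "w \<in> {1..n}"
  using assms(2,3)
proof (induction rule: rtrancl_induct)
  case base then show ?case by simp
next
  case (step w z)
  hence "{w, z} \<in> PS n" using assms(1) by (auto simp: edge_rel_def)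
  then obtain a b where "{w, z} = {a, b}" "a \<in> {1..n}" "b \<in> {1..n}" unfolding PS_def by auto
  thus ?case by (auto simp: doubleton_eq_iff)
qed

lemma graph_Suc: "graph_at E (Suc m) \<omega> = graph_at E m \<omega> \<union> E (Suc m) \<omega>"
  unfolding graph_at_def by (auto simp: atLeastAtMostSuc_conv)

lemma graph_split: "graph_at E (m + d) \<omega> = graph_at E m \<omega> \<union> (\<Union>i\<in>{m<..m+d}. E i \<omega>)"
  unfolding graph_at_def
proof (intro equalityI subsetI)
  fix x assume "x \<in> (\<Union>i\<in>{1..m + d}. E i \<omega>)"
  then obtain i where "i \<in> {1..m+d}" "x \<in> E i \<omega>" by auto
  thus "x \<in> (\<Union>i\<in>{1..m}. E i \<omega>) \<union> (\<Union>i\<in>{m<..m + d}. E i \<omega>)"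
    by (cases "i \<le> m") auto
qed auto

context
  fixes M :: "'a measure" and F :: "nat \<Rightarrow> 'a measure" and n l :: nat
    and v :: "nat \<Rightarrow> 'a \<Rightarrow> nat list" and E :: "nat \<Rightarrow> 'a \<Rightarrow> nat set set"
  assumes R: "ell_vertex_rule M F n l v E"
begin

lemma E_sub_PS: "i \<ge> 1 \<Longrightarrow> \<omega> \<in> space M \<Longrightarrow> E i \<omega> \<subseteq> PS n"
proof
  fix x assume i: "i \<ge> 1" "\<omega> \<in> space M" and x: "x \<in> E i \<omega>"
  have vt: "set (v i \<omega>) \<subseteq> {1..n}" using R_vrange[OF R i] by (auto simp: vertex_tuples_def)
  from R_Erange[OF R i] x obtain a b where "x = {a, b}" "a \<in> set (v i \<omega>)" "b \<in> set (v i \<omega>)" by blast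
  moreover have "a \<in> {1..n}" "b \<in> {1..n}" using vt calculation by auto
  ultimately show "x \<in> PS n" using PS_I by simp
qed

lemma graph_sub_PS: "\<omega> \<in> space M \<Longrightarrow> graph_at E m \<omega> \<subseteq> PS n"
proof
  fix x assume \<omega>: "\<omega> \<in> space M" and "x \<in> graph_at E m \<omega>"
  then obtain i where "i \<in> {1..m}" "x \<in> E i \<omega>" unfolding graph_at_def by auto
  thus "x \<in> PS n" using E_sub_PS[of i \<omega>] \<omega> by auto
qed

lemma graph_pre: "{\<omega> \<in> space M. graph_at E m \<omega> = G} \<in> sets (F m)"
proof (induction m arbitrary: G)
  case 0
  show ?case
  proof (cases "G = {}")
    case True
    hence "{\<omega> \<in> space M. graph_at E 0 \<omega> = G} = space (F 0)" using R_space[OF R] by (auto simp: graph_at_def)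
    thus ?thesis by simp
  next
    case False
    hence e: "{\<omega> \<in> space M. graph_at E 0 \<omega> = G} = {}" by (auto simp: graph_at_def)
    show ?thesis unfolding e by simp
  qed
next
  case (Suc m)
  define P where "P = {p \<in> Pow (PS n) \<times> Pow (PS n). fst p \<union> snd p = G}"
  have finP: "finite P" unfolding P_def using finite_PS by auto
  have "{\<omega> \<in> space M. graph_at E (Suc m) \<omega> = G}
      = (\<Union>p\<in>P. {\<omega> \<in> space M. graph_at E m \<omega> = fst p} \<inter> {\<omega> \<in> space M. E (Suc m) \<omega> = snd p})"
    unfolding P_def graph_Suc using graph_sub_PS E_sub_PS[of "Suc m"] by auto
  also have "\<dots> \<in> sets (F (Suc m))"
  proof (intro sets.finite_UN finP ballI sets.Int)
    fix p :: "nat set set \<times> nat set set"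
    show "{\<omega> \<in> space M. graph_at E m \<omega> = fst p} \<in> sets (F (Suc m))"
      using Suc.IH R_mono[OF R, of m "Suc m"] by auto
    show "{\<omega> \<in> space M. E (Suc m) \<omega> = snd p} \<in> sets (F (Suc m))"
      by (rule E_pre[OF R]) simp
  qed
  finally show ?case .
qed

lemma graph_pred: "{\<omega> \<in> space M. Q (graph_at E m \<omega>)} \<in> sets (F m)"
proof -
  have "{\<omega> \<in> space M. Q (graph_at E m \<omega>)} = (\<Union>G\<in>{G\<in>Pow (PS n). Q G}. {\<omega> \<in> space M. graph_at E m \<omega> = G})"
    using graph_sub_PS by auto
  also have "\<dots> \<in> sets (F m)"
    by (intro sets.finite_UN graph_pre ballI) (use finite_PS in auto)
  finally show ?thesis .
qed

lemma graph_pred2: "{\<omega> \<in> space M. Q (graph_at E m \<omega>) (graph_at E m' \<omega>)} \<in> sets M"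
proof -
  have "{\<omega> \<in> space M. Q (graph_at E m \<omega>) (graph_at E m' \<omega>)}
     = (\<Union>G\<in>Pow (PS n). {\<omega> \<in> space M. graph_at E m \<omega> = G} \<inter> {\<omega> \<in> space M. Q G (graph_at E m' \<omega>)})"
    using graph_sub_PS by auto
  also have "\<dots> \<in> sets M"
  proof (intro sets.finite_UN ballI sets.Int)
    fix G
    show "{\<omega> \<in> space M. graph_at E m \<omega> = G} \<in> sets M" using graph_pre R_sets[OF R] by blast
    show "{\<omega> \<in> space M. Q G (graph_at E m' \<omega>)} \<in> sets M" using graph_pred R_sets[OF R] by blast
  qed (use finite_PS in auto)
  finally show ?thesis .
qed

lemma comp_pres:
  assumes \<omega>: "\<omega> \<in> space M" and u: "u \<in> {1..n}" and d: "d \<le> T"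
    and dis: "\<forall>y\<in>set (Vs v m T \<omega>). set y \<inter> comp n (graph_at E m \<omega>) u = {}"
  shows "comp n (graph_at E (m + d) \<omega>) u = comp n (graph_at E m \<omega>) u"
proof -
  define G0 where "G0 = graph_at E m \<omega>"
  define G1 where "G1 = graph_at E (m + d) \<omega>"
  have G01: "G1 = G0 \<union> (\<Union>i\<in>{m<..m+d}. E i \<omega>)" unfolding G0_def G1_def by (rule graph_split)
  have G0P: "G0 \<subseteq> PS n" unfolding G0_def by (rule graph_sub_PS[OF \<omega>])
  have R01: "edge_rel G0 \<subseteq> edge_rel G1" unfolding G01 edge_rel_def by auto
  have bk: "\<And>w. (u, w) \<in> (edge_rel G1)\<^sup>* \<Longrightarrow> (u, w) \<in> (edge_rel G0)\<^sup>*"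
  proof -
    fix w assume W: "(u, w) \<in> (edge_rel G1)\<^sup>*"
    show "(u, w) \<in> (edge_rel G0)\<^sup>*" using W
  proof (induction rule: rtrancl_induct)
    case base then show ?case by simp
  next
    case (step w z)
    have wV: "w \<in> {1..n}" by (rule rtrancl_in_V[OF G0P step.IH u])
    have "{w, z} \<in> G1" using step.hyps(2) by (auto simp: edge_rel_def)
    show ?case
    proof (cases "{w, z} \<in> G0")
      case True
      hence "(w, z) \<in> edge_rel G0" by (simp add: edge_rel_def)
      thus ?thesis using step.IH by (simp add: rtrancl_into_rtrancl)
    next
      case False
      then obtain i where i: "i \<in> {m<..m+d}" "{w, z} \<in> E i \<omega>" using \<open>{w, z} \<in> G1\<close> G01 by auto
      have "i \<ge> 1" using i by auto
      from R_Erange[OF R this \<omega>] i obtain a b where ab: "{w, z} = {a, b}" "a \<in> set (v i \<omega>)" "b \<in> set (v i \<omega>)"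
        by blast
      have wv: "w \<in> set (v i \<omega>)" using ab by (auto simp: doubleton_eq_iff)
      have "v i \<omega> \<in> set (Vs v m T \<omega>)" unfolding set_Vs using i d by auto
      moreover have "w \<in> comp n G0 u" using wV step.IH by (simp add: comp_def)
      ultimately show ?thesis using dis wv unfolding G0_def by auto
    qed
  qed
  qed
  have "comp n G1 u \<subseteq> comp n G0 u" unfolding comp_def using bk by auto
  moreover have "comp n G0 u \<subseteq> comp n G1 u" unfolding comp_def using rtrancl_mono[OF R01] by auto
  ultimately show ?thesis unfolding G0_def G1_def by auto
qed

end



lemma lemma2_aux:
  fixes M :: "'a measure" and F :: "nat \<Rightarrow> 'a measure" and n l B :: nat
    and v :: "nat \<Rightarrow> 'a \<Rightarrow> nat list" and E :: "nat \<Rightarrow> 'a \<Rightarrow> nat set set"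
    and \<alpha> D :: real
  assumes "l \<ge> 2" and "ell_vertex_rule M F n l v E"
    and "0 < \<alpha>" and "\<alpha> \<le> 1" and "D > 0" and "B \<ge> 2"
  shows "measure M {\<omega> \<in> space M.
           \<forall>m k. m \<le> n ^ 2 \<and> 1 \<le> k \<and>
             real k \<le> min (\<alpha>\<^sup>2 * exp (- 4 * real l * real B * D) / (8 * (real l)\<^sup>2 * (real B)\<^sup>2 * D)
                              * (real n / ln (real n)))
                           (real n / (2 * real B)) \<longrightarrow>
             (of_int (M_kB n (graph_at E m \<omega>) k B) \<ge> \<alpha> * real n \<longrightarrow>
               (\<forall>\<Delta>::nat. real \<Delta> \<le> D * real n / real k \<longrightarrow>
                  of_int (M_kB n (graph_at E (m + \<Delta>) \<omega>) k B) > \<alpha> / (2 * real B) * exp (- 2 * real l * real B * D) * real n))}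
         \<ge> 1 - 1 / real n"
proof -
  note R = assms(2)
  interpret P: prob_space M by (rule R_prob[OF R])
  consider "n = 0" | "n = 1" | "n \<ge> 2" by linarith
  then show ?thesis
  proof cases
    case 1
    obtain \<omega> where \<omega>: "\<omega> \<in> space M" using P.not_empty by blast
    have "v 1 \<omega> \<in> vertex_tuples n l" by (rule R_vrange[OF R _ \<omega>]) simp
    hence False using 1 assms(1) by (cases "v 1 \<omega>") (auto simp: vertex_tuples_def)
    thus ?thesis ..
  next
    case 2 thus ?thesis by simp
  next
    case 3
    hence n2: "n \<ge> 2" .
    define thr where "thr = \<alpha> / (2 * real B) * exp (- 2 * real l * real B * D) * real n"
    define K where "K = min (\<alpha>\<^sup>2 * exp (- 4 * real l * real B * D) / (8 * (real l)\<^sup>2 * (real B)\<^sup>2 * D)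
                              * (real n / ln (real n))) (real n / (2 * real B))"
    define T where "T k = nat \<lfloor>D * real n / real k\<rfloor>" for k :: nat
    define X where "X = vertex_tuples n l"
    define BadL where "BadL G k = {ys\<in>LS X (T k). real (Ucnt n G k B ys) \<le> thr}" for G k
    define Gs where "Gs k = {G\<in>Pow (PS n). \<alpha> * real n \<le> of_int (M_kB n G k B)}" for k
    define Bad where "Bad m k = (\<Union>G\<in>Gs k. {\<omega> \<in> space M. graph_at E m \<omega> = G} \<inter> {\<omega> \<in> space M. Vs v m (T k) \<omega> \<in> BadL G k})" for m k
    define I where "I = {p \<in> {0..n^2} \<times> {1..n}. real (snd p) \<le> K}"
    define Good where "Good = {\<omega> \<in> space M.
           \<forall>m k. m \<le> n ^ 2 \<and> 1 \<le> k \<and> real k \<le> K \<longrightarrow>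
             (of_int (M_kB n (graph_at E m \<omega>) k B) \<ge> \<alpha> * real n \<longrightarrow>
               (\<forall>\<Delta>::nat. real \<Delta> \<le> D * real n / real k \<longrightarrow>
                  of_int (M_kB n (graph_at E (m + \<Delta>) \<omega>) k B) > thr))}"
    have n0: "real n > 0" using n2 by simp
    have B1: "B \<ge> 1" using assms(6) by simp
    have Tle: "real (T k) \<le> D * real n / real k" for k
    proof -
      have "D * real n / real k \<ge> 0" using assms(5) by simp
      thus ?thesis unfolding T_def by linarith
    qed
    define Q where "Q m k \<Delta> G G' = (m \<le> n ^ 2 \<and> 1 \<le> k \<and> real k \<le> K \<longrightarrow>
             (of_int (M_kB n G k B) \<ge> \<alpha> * real n \<longrightarrow>
               (real \<Delta> \<le> D * real n / real k \<longrightarrow> of_int (M_kB n G' k B) > thr)))" for m k \<Delta> :: nat and G G'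
    define S where "S p = {\<omega> \<in> space M. Q (fst p) (fst (snd p)) (snd (snd p))
             (graph_at E (fst p) \<omega>) (graph_at E (fst p + snd (snd p)) \<omega>)}" for p :: "nat \<times> nat \<times> nat"
    have Sm: "S p \<in> sets M" for p unfolding S_def by (rule graph_pred2[OF R])
    have GoodQ: "Good = {\<omega> \<in> space M. \<forall>m k \<Delta>. Q m k \<Delta> (graph_at E m \<omega>) (graph_at E (m + \<Delta>) \<omega>)}"
      unfolding Good_def Q_def by blast
    have GoodS: "Good = (\<Inter>p\<in>UNIV. S p)"
      unfolding GoodQ S_def by auto
    have Goodm: "Good \<in> sets M" unfolding GoodS using Sm by (intro sets.countable_INT) auto
    have cover: "space M - Good \<subseteq> (\<Union>p\<in>I. Bad (fst p) (snd p))"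
    proof
      fix \<omega> assume "\<omega> \<in> space M - Good"
      then obtain m k \<Delta> where \<omega>: "\<omega> \<in> space M" and mk: "m \<le> n ^ 2" "1 \<le> k" "real k \<le> K"
        and Mm: "of_int (M_kB n (graph_at E m \<omega>) k B) \<ge> \<alpha> * real n"
        and \<Delta>: "real \<Delta> \<le> D * real n / real k"
        and Mb: "\<not> of_int (M_kB n (graph_at E (m + \<Delta>) \<omega>) k B) > thr"
      proof -
        assume r: "\<And>m k \<Delta>. \<omega> \<in> space M \<Longrightarrow> m \<le> n ^ 2 \<Longrightarrow> 1 \<le> k \<Longrightarrow> real k \<le> K \<Longrightarrow>
          of_int (M_kB n (graph_at E m \<omega>) k B) \<ge> \<alpha> * real n \<Longrightarrow> real \<Delta> \<le> D * real n / real k \<Longrightarrow>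
          \<not> of_int (M_kB n (graph_at E (m + \<Delta>) \<omega>) k B) > thr \<Longrightarrow> thesis"
        from \<open>\<omega> \<in> space M - Good\<close> obtain m k \<Delta> where "\<omega> \<in> space M"
          "\<not> Q m k \<Delta> (graph_at E m \<omega>) (graph_at E (m + \<Delta>) \<omega>)" unfolding GoodQ by blast
        thus thesis unfolding Q_def using r by blast
      qed
      have kn: "k \<le> n"
      proof -
        have "real k \<le> real n / (2 * real B)" using mk(3) by (simp add: K_def)
        also have "\<dots> \<le> real n" using n0 assms(6) by (simp add: field_simps)
        finally show ?thesis by simp
      qed
      have pI: "(m, k) \<in> I" unfolding I_def using mk kn by auto
      define G where "G = graph_at E m \<omega>"
      have GG: "G \<in> Gs k" unfolding Gs_def G_def using graph_sub_PS[OF R \<omega>] Mm by auto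
      have \<Delta>T: "\<Delta> \<le> T k"
      proof -
        show ?thesis unfolding T_def using \<Delta> by (rule le_nat_floor)
      qed
      have sub: "{u\<in>goodW n G k B. \<forall>y\<in>set (Vs v m (T k) \<omega>). set y \<inter> comp n G u = {}}
                 \<subseteq> goodW n (graph_at E (m + \<Delta>) \<omega>) k B"
      proof
        fix u assume u: "u \<in> {u\<in>goodW n G k B. \<forall>y\<in>set (Vs v m (T k) \<omega>). set y \<inter> comp n G u = {}}"
        have uV: "u \<in> {1..n}" using u by (auto simp: goodW_def)
        have "comp n (graph_at E (m + \<Delta>) \<omega>) u = comp n G u"
          using comp_pres[OF R \<omega> uV \<Delta>T] u unfolding G_def by auto
        thus "u \<in> goodW n (graph_at E (m + \<Delta>) \<omega>) k B" using u by (auto simp: goodW_def)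
      qed
      have "Ucnt n G k B (Vs v m (T k) \<omega>) \<le> card (goodW n (graph_at E (m + \<Delta>) \<omega>) k B)"
        unfolding Ucnt_def by (rule card_mono[OF _ sub]) (simp add: goodW_def)
      hence "real (Ucnt n G k B (Vs v m (T k) \<omega>)) \<le> of_int (M_kB n (graph_at E (m + \<Delta>) \<omega>) k B)"
        using M_kB_goodW[OF B1] by simp
      hence "real (Ucnt n G k B (Vs v m (T k) \<omega>)) \<le> thr" using Mb by linarith
      hence "Vs v m (T k) \<omega> \<in> BadL G k" unfolding BadL_def X_def using Vs_LS[OF R \<omega>] by auto
      hence "\<omega> \<in> Bad m k" unfolding Bad_def using GG \<omega> G_def by auto
      thus "\<omega> \<in> (\<Union>p\<in>I. Bad (fst p) (snd p))" using pI by force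
    qed
    have finGs: "finite (Gs k)" for k unfolding Gs_def using finite_PS by auto
    have Badm: "Bad m k \<in> sets M" for m k
      unfolding Bad_def
      by (intro sets.finite_UN ballI Vs_bad_meas[OF R] graph_pre[OF R] finGs)
    have Badp: "measure M (Bad m k) \<le> 1 / real n ^ 5" if p: "(m, k) \<in> I" for m k
    proof -
      have finG: "finite (Gs k)" unfolding Gs_def using finite_PS by auto
      define A where "A G = {\<omega> \<in> space M. graph_at E m \<omega> = G}" for G
      have Am: "A G \<in> sets (F m)" for G unfolding A_def by (rule graph_pre[OF R])
      have kk: "1 \<le> k" "real k \<le> K" using p by (auto simp: I_def)
      have cardB: "real (card (BadL G k \<inter> LS (vertex_tuples n l) (T k))) \<le> real ((n ^ l) ^ T k) / real n ^ 5"
        if G: "G \<in> Gs k" for G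
      proof -
        have "BadL G k \<inter> LS (vertex_tuples n l) (T k) = BadL G k" unfolding BadL_def X_def by auto
        moreover have "real (card (BadL G k)) \<le> real ((n ^ l) ^ T k) / real n ^ 5"
          unfolding BadL_def X_def thr_def
        proof (rule key_bound[OF n2 _ assms(6) kk(1) assms(3) assms(5) _ _ _ Tle])
          show "1 \<le> l" using assms(1) by simp
          show "real k \<le> \<alpha>\<^sup>2 * exp (- 4 * real l * real B * D) / (8 * (real l)\<^sup>2 * (real B)\<^sup>2 * D) * (real n / ln (real n))"
            using kk(2) by (simp add: K_def)
          show "real k \<le> real n / (2 * real B)" using kk(2) by (simp add: K_def)
          show "\<alpha> * real n \<le> real (card (goodW n G k B))" using G M_kB_goodW[OF B1] by (simp add: Gs_def)
        qed
        ultimately show ?thesis by simp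
      qed
      have "measure M (Bad m k) \<le> (\<Sum>G\<in>Gs k. measure M (A G \<inter> {\<omega> \<in> space M. Vs v m (T k) \<omega> \<in> BadL G k}))"
        unfolding Bad_def A_def[symmetric]
        by (rule P.finite_measure_subadditive_finite[OF finG])
           (use Vs_bad_meas[OF R Am] in blast)
      also have "\<dots> \<le> (\<Sum>G\<in>Gs k. real (card (BadL G k \<inter> LS (vertex_tuples n l) (T k))) * measure M (A G) / (real n ^ l) ^ T k)"
        by (intro sum_mono Vs_bad[OF R Am])
      also have "\<dots> \<le> (\<Sum>G\<in>Gs k. measure M (A G) / real n ^ 5)"
      proof (intro sum_mono)
        fix G assume G: "G \<in> Gs k"
        have pos: "(real n ^ l) ^ T k > 0" using n0 by simp
        have "real (card (BadL G k \<inter> LS (vertex_tuples n l) (T k))) * measure M (A G) / (real n ^ l) ^ T k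
             \<le> (real ((n ^ l) ^ T k) / real n ^ 5) * measure M (A G) / (real n ^ l) ^ T k"
          using cardB[OF G] pos by (intro divide_right_mono mult_right_mono) auto
        also have "\<dots> = measure M (A G) / real n ^ 5" using pos by (simp add: field_simps)
        finally show "real (card (BadL G k \<inter> LS (vertex_tuples n l) (T k))) * measure M (A G) / (real n ^ l) ^ T k
             \<le> measure M (A G) / real n ^ 5" .
      qed
      also have "\<dots> = measure M (\<Union>G\<in>Gs k. A G) / real n ^ 5"
      proof -
        have "measure M (\<Union>G\<in>Gs k. A G) = (\<Sum>G\<in>Gs k. measure M (A G))"
          by (rule P.finite_measure_finite_Union[OF finG])
             (use Am R_sets[OF R] in \<open>auto simp: disjoint_family_on_def A_def\<close>)
        thus ?thesis by (simp add: sum_divide_distrib)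
      qed
      also have "\<dots> \<le> 1 / real n ^ 5" using n0 by (intro divide_right_mono) auto
      finally show ?thesis .
    qed
    have finI: "finite I" unfolding I_def by (rule finite_subset[of _ "{0..n^2} \<times> {1..n}"]) auto
    have cardI: "card I \<le> (n^2 + 1) * n"
    proof -
      have "card I \<le> card ({0..n^2} \<times> {1..n})" unfolding I_def by (rule card_mono) auto
      thus ?thesis by (simp add: card_cartesian_product)
    qed
    have "measure M (space M - Good) \<le> measure M (\<Union>p\<in>I. Bad (fst p) (snd p))"
      using cover Badm finI by (intro P.finite_measure_mono) auto
    also have "\<dots> \<le> (\<Sum>p\<in>I. measure M (Bad (fst p) (snd p)))"
      using Badm by (intro P.finite_measure_subadditive_finite finI) auto
    also have "\<dots> \<le> (\<Sum>p\<in>I. 1 / real n ^ 5)"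
      using Badp by (intro sum_mono) auto
    also have "\<dots> = real (card I) / real n ^ 5" by simp
    also have "\<dots> \<le> real ((n^2 + 1) * n) / real n ^ 5"
    proof (rule divide_right_mono)
      show "real (card I) \<le> real ((n^2 + 1) * n)" using cardI by (simp only: of_nat_le_iff)
    qed simp
    also have "\<dots> \<le> 1 / real n"
    proof -
      have nn: "n * n \<ge> 1" using n2 by (simp add: one_le_mult_iff)
      have "2 * (n * n) \<le> n * (n * n)" using n2 by (intro mult_right_mono) auto
      hence "n * n + 1 \<le> n * (n * n)" using nn by linarith
      hence "n^2 + 1 \<le> n^3" by (simp add: power2_eq_square power3_eq_cube)
      hence "(n^2 + 1) * n \<le> n^3 * n" by (rule mult_right_mono) simp
      hence "(n^2 + 1) * n \<le> n^4" by (simp add: power_numeral_reduce)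
      hence "real ((n^2 + 1) * n) \<le> real (n ^ 4)" by (simp only: of_nat_le_iff)
      hence "real ((n^2 + 1) * n) \<le> real n ^ 4" by simp
      hence "real ((n^2 + 1) * n) / real n ^ 5 \<le> real n ^ 4 / real n ^ 5"
        by (rule divide_right_mono) simp
      also have "real n ^ 4 / real n ^ 5 = 1 / real n" using n0 by (simp add: power_numeral_reduce)
      finally show ?thesis .
    qed
    finally have bad: "measure M (space M - Good) \<le> 1 / real n" .
    have "measure M Good = 1 - measure M (space M - Good)"
    proof -
      have "space M - (space M - Good) = Good" using sets.sets_into_space[OF Goodm] by auto
      thus ?thesis using P.prob_compl[of "space M - Good"] Goodm by auto
    qed
    hence "measure M Good \<ge> 1 - 1 / real n" using bad by linarith
    thus ?thesis unfolding Good_def thr_def K_def .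
  qed
qed

theorem lemma2:
  fixes M :: "'a measure" and F :: "nat \<Rightarrow> 'a measure" and n l B :: nat
    and v :: "nat \<Rightarrow> 'a \<Rightarrow> nat list" and E :: "nat \<Rightarrow> 'a \<Rightarrow> nat set set"
    and \<alpha> D :: real
  assumes "l \<ge> 2" and "ell_vertex_rule M F n l v E"
    and "0 < \<alpha>" and "\<alpha> \<le> 1" and "D > 0" and "B \<ge> 2"
  shows "measure M {\<omega> \<in> space M.
           \<forall>m k. m \<le> n ^ 2 \<and> 1 \<le> k \<and>
             real k \<le> min (\<alpha>\<^sup>2 * exp (- 4 * l * B * D) / (8 * (real l)\<^sup>2 * (real B)\<^sup>2 * D)
                              * (real n / ln (real n)))
                           (real n / (2 * B)) \<longrightarrow>
             (of_int (M_kB n (graph_at E m \<omega>) k B) \<ge> \<alpha> * n \<longrightarrow>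
               (\<forall>\<Delta>::nat. real \<Delta> \<le> D * real n / real k \<longrightarrow>
                  of_int (M_kB n (graph_at E (m + \<Delta>) \<omega>) k B) > \<alpha> / (2 * B) * exp (- 2 * l * B * D) * n))}
         \<ge> 1 - 1 / real n"
  using lemma2_aux[OF assms] by simp


end
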